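(* Let $1\le r\le n$, let $I=(x_1,\ldots,x_r)\subset S=K[x_1,\ldots,x_n]$, and let $J\subsetneq I$ be a nonzero square free monomial ideal generated by square free monomials of degrees $\geq 2$. Suppose every square free monomial of degree $2$ lying in $I\setminus J$ belongs to $K[x_1,\ldots,x_r]$. Then $\operatorname{depth}_S I/J=1$ (no assumption relating $r$ and the number of such degree-$2$ monomials is needed).
   Context: $S=K[x_1,\ldots,x_n]$ is the polynomial ring over a field $K$; depth is taken over $S$. *)

theory Defs
  imports "HOL-Library.Poly_Mapping"
begin

text \<open>Polynomials over a field K in the variables x_0, x_1, ... are elements of
  (nat =>0 nat) =>0 K (monomial exponent vector |-> coefficient).
  The polynomial ring S = K[x_1,...,x_n] is the subring of polynomials whose
  monomials only involve the variables with index < n (variable x_(i+1) of the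
  paper is index i here).\<close>

type_synonym 'a mpoly = "(nat \<Rightarrow>\<^sub>0 nat) \<Rightarrow>\<^sub>0 'a"

definition polyring :: "nat \<Rightarrow> 'a::field mpoly set" where
  "polyring n = {p. \<forall>m \<in> Poly_Mapping.keys p. Poly_Mapping.keys m \<subseteq> {..<n}}"

definition var :: "nat \<Rightarrow> 'a::field mpoly" where
  "var i = Poly_Mapping.single (Poly_Mapping.single i 1) 1"

definition monom :: "(nat \<Rightarrow>\<^sub>0 nat) \<Rightarrow> 'a::field mpoly" where
  "monom m = Poly_Mapping.single m 1"

definition mdeg :: "(nat \<Rightarrow>\<^sub>0 nat) \<Rightarrow> nat" where
  "mdeg m = (\<Sum>i\<in>Poly_Mapping.keys m. Poly_Mapping.lookup m i)"

definition sqfree :: "(nat \<Rightarrow>\<^sub>0 nat) \<Rightarrow> bool" where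
  "sqfree m \<longleftrightarrow> (\<forall>i. Poly_Mapping.lookup m i \<le> 1)"

definition ideal_gen :: "nat \<Rightarrow> 'a::field mpoly set \<Rightarrow> 'a mpoly set" where
  "ideal_gen n G = {\<Sum>g\<in>F. c g * g | F c. finite F \<and> F \<subseteq> G \<and> (\<forall>g\<in>F. c g \<in> polyring n)}"

definition seq_times :: "'a::field mpoly list \<Rightarrow> 'a mpoly set \<Rightarrow> 'a mpoly set" where
  "seq_times fs M = {\<Sum>j<length fs. fs ! j * u j | u. \<forall>j<length fs. u j \<in> M}"

definition set_plus :: "'a::field mpoly set \<Rightarrow> 'a mpoly set \<Rightarrow> 'a mpoly set" where
  "set_plus A B = {a + b | a b. a \<in> A \<and> b \<in> B}"

text \<open>fs is a regular sequence on the S-module I/J (J \<subseteq> I ideals of S), with all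
  elements in the maximal ideal (x_1,...,x_n):  each f_i is a nonzerodivisor on
  (I/J)/(f_1..f_(i-1))(I/J) and (I/J) \<noteq> (f_1..f_k)(I/J).\<close>
definition quot_regular_seq :: "nat \<Rightarrow> 'a::field mpoly set \<Rightarrow> 'a mpoly set \<Rightarrow> 'a mpoly list \<Rightarrow> bool" where
  "quot_regular_seq n I J fs \<longleftrightarrow>
     (\<forall>f \<in> set fs. f \<in> ideal_gen n (var ` {..<n})) \<and>
     (\<forall>i<length fs. \<forall>u\<in>I.
        fs ! i * u \<in> set_plus J (seq_times (take i fs) I) \<longrightarrow> u \<in> set_plus J (seq_times (take i fs) I)) \<and>
     \<not> I \<subseteq> set_plus J (seq_times fs I)"

definition depth_quot :: "nat \<Rightarrow> 'a::field mpoly set \<Rightarrow> 'a mpoly set \<Rightarrow> nat" where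
  "depth_quot n I J = Sup {length fs | fs. quot_regular_seq n I J fs}"

end

theory Submission
  imports Defs
begin


definition dvdm :: "(nat \<Rightarrow>\<^sub>0 nat) \<Rightarrow> (nat \<Rightarrow>\<^sub>0 nat) \<Rightarrow> bool" where
  "dvdm g m \<longleftrightarrow> (\<forall>i. Poly_Mapping.lookup g i \<le> Poly_Mapping.lookup m i)"

definition mchar :: "nat \<Rightarrow> (nat \<Rightarrow>\<^sub>0 nat) set \<Rightarrow> 'a::field mpoly set" where
  "mchar n Gm = {p \<in> polyring n. \<forall>\<mu>\<in>Poly_Mapping.keys p. \<exists>g\<in>Gm. dvdm g \<mu>}"

definition restr :: "'a::field mpoly \<Rightarrow> (nat \<Rightarrow>\<^sub>0 nat) set \<Rightarrow> 'a mpoly" where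
  "restr p A = Abs_poly_mapping (\<lambda>k. if k \<in> A then Poly_Mapping.lookup p k else 0)"

lemma lookup_restr: "Poly_Mapping.lookup (restr p A) k = (if k \<in> A then Poly_Mapping.lookup p k else 0)"
proof -
  have "finite {k. (if k \<in> A then Poly_Mapping.lookup p k else 0) \<noteq> 0}"
    by (rule finite_subset[of _ "Poly_Mapping.keys p"]) (auto simp: in_keys_iff)
  then show ?thesis unfolding restr_def by simp
qed

lemma keys_restr: "Poly_Mapping.keys (restr p A) = Poly_Mapping.keys p \<inter> A"
  by (auto simp: in_keys_iff lookup_restr split: if_splits)

lemma restr_split: "p = restr p A + restr p (- A)"
  by (rule poly_mapping_eqI) (simp add: lookup_add lookup_restr)

lemma keys_add_nat: "Poly_Mapping.keys ((a::nat \<Rightarrow>\<^sub>0 nat) + b) = Poly_Mapping.keys a \<union> Poly_Mapping.keys b"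
  by (auto simp: in_keys_iff lookup_add)

lemma mdeg_superset: "finite S \<Longrightarrow> Poly_Mapping.keys m \<subseteq> S \<Longrightarrow> mdeg m = (\<Sum>i\<in>S. Poly_Mapping.lookup m i)"
  unfolding mdeg_def by (rule sum.mono_neutral_left) (auto simp: in_keys_iff)

lemma mdeg_add: "mdeg (a + b) = mdeg a + mdeg b"
proof -
  let ?S = "Poly_Mapping.keys a \<union> Poly_Mapping.keys b"
  have "mdeg (a+b) = (\<Sum>i\<in>?S. Poly_Mapping.lookup (a+b) i)" by (rule mdeg_superset) (auto simp: keys_add_nat)
  also have "\<dots> = (\<Sum>i\<in>?S. Poly_Mapping.lookup a i) + (\<Sum>i\<in>?S. Poly_Mapping.lookup b i)" by (simp add: lookup_add sum.distrib)
  also have "\<dots> = mdeg a + mdeg b"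
  proof -
    have "mdeg a = (\<Sum>i\<in>?S. Poly_Mapping.lookup a i)" by (rule mdeg_superset) auto
    moreover have "mdeg b = (\<Sum>i\<in>?S. Poly_Mapping.lookup b i)" by (rule mdeg_superset) auto
    ultimately show ?thesis by simp
  qed
  finally show ?thesis .
qed

lemma mdeg_pos: "m \<noteq> 0 \<Longrightarrow> 1 \<le> mdeg m"
proof -
  assume "m \<noteq> 0"
  then obtain i where i: "i \<in> Poly_Mapping.keys m" by (metis keys_eq_empty ex_in_conv)
  have "Poly_Mapping.lookup m i \<le> mdeg m" unfolding mdeg_def by (rule member_le_sum) (use i in auto)
  with i show ?thesis by (simp add: in_keys_iff)
qed

lemma mdeg_mono: "dvdm g m \<Longrightarrow> mdeg g \<le> mdeg m"
proof -
  assume d: "dvdm g m"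
  have ks: "Poly_Mapping.keys g \<subseteq> Poly_Mapping.keys m" using d unfolding dvdm_def by (metis in_keys_iff le_zero_eq subsetI)
  have "mdeg g = (\<Sum>i\<in>Poly_Mapping.keys m. Poly_Mapping.lookup g i)" by (rule mdeg_superset) (use ks in auto)
  also have "\<dots> \<le> (\<Sum>i\<in>Poly_Mapping.keys m. Poly_Mapping.lookup m i)" by (rule sum_mono) (use d in \<open>auto simp: dvdm_def\<close>)
  finally show ?thesis by (simp add: mdeg_def)
qed

lemma mdeg_single: "mdeg (Poly_Mapping.single i 1) = 1"
  by (simp add: mdeg_def)

lemma mult_single_lookup:
  fixes p :: "'a::field mpoly"
  shows "Poly_Mapping.lookup (Poly_Mapping.single t c * p) (t + s) = c * Poly_Mapping.lookup p s"
proof -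
  have sp: "p = restr p {s} + restr p (- {s})" by (rule restr_split)
  have r1: "restr p {s} = Poly_Mapping.single s (Poly_Mapping.lookup p s)"
    by (rule poly_mapping_eqI) (simp add: lookup_restr lookup_single when_def)
  have "t + s \<notin> Poly_Mapping.keys (Poly_Mapping.single t c * restr p (- {s}))"
  proof
    assume "t + s \<in> Poly_Mapping.keys (Poly_Mapping.single t c * restr p (- {s}))"
    then obtain a b where "a \<in> Poly_Mapping.keys (Poly_Mapping.single t c)" "b \<in> Poly_Mapping.keys (restr p (- {s}))" "t + s = a + b"
      using keys_mult by blast
    then show False by (auto simp: keys_restr split: if_splits)
  qed
  then have z: "Poly_Mapping.lookup (Poly_Mapping.single t c * restr p (- {s})) (t + s) = 0"
    by (simp add: in_keys_iff)
  have "Poly_Mapping.single t c * p = Poly_Mapping.single (t + s) (c * Poly_Mapping.lookup p s) + Poly_Mapping.single t c * restr p (- {s})"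
    by (subst sp) (simp add: distrib_left r1 mult_single)
  then show ?thesis using z by (simp add: lookup_add)
qed

lemma polyring_iff: "p \<in> polyring n \<longleftrightarrow> (\<forall>m\<in>Poly_Mapping.keys p. Poly_Mapping.keys m \<subseteq> {..<n})"
  by (simp add: polyring_def)

lemma polyring_zero: "0 \<in> polyring n"
  by (simp add: polyring_def)

lemma polyring_add: "a \<in> polyring n \<Longrightarrow> b \<in> polyring n \<Longrightarrow> a + b \<in> polyring n"
  unfolding polyring_iff by (meson Un_iff keys_add subsetD)

lemma polyring_uminus: "a \<in> polyring n \<Longrightarrow> - a \<in> polyring n"
  unfolding polyring_def by simp

lemma polyring_diff: "a \<in> polyring n \<Longrightarrow> b \<in> polyring n \<Longrightarrow> a - b \<in> polyring n"
  unfolding polyring_iff by (meson Un_iff keys_diff subsetD)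

lemma polyring_mult: "a \<in> polyring n \<Longrightarrow> b \<in> polyring n \<Longrightarrow> a * b \<in> polyring n"
proof -
  assume a: "a \<in> polyring n" and b: "b \<in> polyring n"
  show ?thesis unfolding polyring_iff
  proof
    fix m assume "m \<in> Poly_Mapping.keys (a * b)"
    then obtain x y where xy: "x \<in> Poly_Mapping.keys a" "y \<in> Poly_Mapping.keys b" "m = x + y"
      using keys_mult[of a b] by auto
    have "Poly_Mapping.keys x \<subseteq> {..<n}" using a xy(1) by (simp add: polyring_iff)
    moreover have "Poly_Mapping.keys y \<subseteq> {..<n}" using b xy(2) by (simp add: polyring_iff)
    ultimately show "Poly_Mapping.keys m \<subseteq> {..<n}" using xy(3) by (simp add: keys_add_nat)
  qed
qed

lemma polyring_single: "Poly_Mapping.keys \<mu> \<subseteq> {..<n} \<Longrightarrow> Poly_Mapping.single \<mu> c \<in> polyring n"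
  unfolding polyring_def by simp

lemma polyring_restr: "a \<in> polyring n \<Longrightarrow> restr a A \<in> polyring n"
  unfolding polyring_def by (simp add: keys_restr)


lemma ideal_gen_zero: "0 \<in> ideal_gen n G"
  unfolding ideal_gen_def by (rule CollectI, rule exI[of _ "{}"], auto)

lemma ideal_gen_add:
  assumes "x \<in> ideal_gen n G" "y \<in> ideal_gen n G"
  shows "x + y \<in> ideal_gen n G"
proof -
  obtain F1 c1 where 1: "x = (\<Sum>g\<in>F1. c1 g * g)" "finite F1" "F1 \<subseteq> G" "\<forall>g\<in>F1. c1 g \<in> polyring n"
    using assms(1) unfolding ideal_gen_def by blast
  obtain F2 c2 where 2: "y = (\<Sum>g\<in>F2. c2 g * g)" "finite F2" "F2 \<subseteq> G" "\<forall>g\<in>F2. c2 g \<in> polyring n"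
    using assms(2) unfolding ideal_gen_def by blast
  define c where "c g = (if g \<in> F1 then c1 g else 0) + (if g \<in> F2 then c2 g else 0)" for g
  have "(\<Sum>g\<in>F1 \<union> F2. c g * g) = (\<Sum>g\<in>F1 \<union> F2. (if g \<in> F1 then c1 g * g else 0)) + (\<Sum>g\<in>F1 \<union> F2. (if g \<in> F2 then c2 g * g else 0))"
    unfolding sum.distrib[symmetric] by (rule sum.cong) (simp_all add: c_def distrib_right)
  also have "\<dots> = x + y"
    using 1 2 by (simp add: sum.inter_restrict[symmetric] Int_absorb1 Int_absorb2)
  finally have "x + y = (\<Sum>g\<in>F1 \<union> F2. c g * g)" by simp
  moreover have "\<forall>g\<in>F1 \<union> F2. c g \<in> polyring n"
    using 1 2 unfolding c_def by (auto intro!: polyring_add simp: polyring_zero)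
  ultimately show ?thesis using 1 2 unfolding ideal_gen_def by blast
qed

lemma ideal_gen_single:
  assumes "g \<in> Gm" "dvdm g \<mu>" "Poly_Mapping.keys \<mu> \<subseteq> {..<n}"
  shows "Poly_Mapping.single \<mu> (c::'a::field) \<in> ideal_gen n (monom ` Gm)"
proof -
  have e: "\<mu> - g + g = \<mu>"
    using assms(2) by (intro poly_mapping_eqI) (simp add: lookup_add lookup_minus dvdm_def)
  have k: "Poly_Mapping.keys (\<mu> - g) \<subseteq> {..<n}"
  proof
    fix x assume "x \<in> Poly_Mapping.keys (\<mu> - g)"
    then have "x \<in> Poly_Mapping.keys \<mu>" by (auto simp: in_keys_iff lookup_minus)
    then show "x \<in> {..<n}" using assms(3) by blast
  qed
  have "\<exists>F cc. Poly_Mapping.single \<mu> c = (\<Sum>h\<in>F. cc h * h) \<and> finite F \<and> F \<subseteq> monom ` Gm \<and> (\<forall>h\<in>F. cc h \<in> polyring n)"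
    apply (rule exI[of _ "{monom g}"], rule exI[of _ "\<lambda>_. Poly_Mapping.single (\<mu> - g) c"])
    using k assms(1) by (simp add: monom_def mult_single e polyring_single)
  then show ?thesis unfolding ideal_gen_def by simp
qed

lemma poly_sum_singles: "p = (\<Sum>k\<in>Poly_Mapping.keys p. Poly_Mapping.single k (Poly_Mapping.lookup p k))"
  by (rule poly_mapping_eqI) (simp add: lookup_sum lookup_single when_def in_keys_iff)

lemma ideal_gen_monom:
  assumes "\<forall>g\<in>Gm. Poly_Mapping.keys g \<subseteq> {..<n}"
  shows "ideal_gen n (monom ` Gm) = (mchar n Gm :: 'a::field mpoly set)"
proof
  show "ideal_gen n (monom ` Gm) \<subseteq> (mchar n Gm :: 'a mpoly set)"
  proof
    fix p :: "'a mpoly" assume "p \<in> ideal_gen n (monom ` Gm)"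
    then obtain F c where F: "p = (\<Sum>g\<in>F. c g * g)" "finite F" "F \<subseteq> monom ` Gm" "\<forall>g\<in>F. c g \<in> polyring n"
      unfolding ideal_gen_def by blast
    have "\<mu> \<in> Poly_Mapping.keys p \<Longrightarrow> Poly_Mapping.keys \<mu> \<subseteq> {..<n} \<and> (\<exists>g\<in>Gm. dvdm g \<mu>)" for \<mu>
    proof -
      assume "\<mu> \<in> Poly_Mapping.keys p"
      then obtain h where h: "h \<in> F" "\<mu> \<in> Poly_Mapping.keys (c h * h)"
        using keys_sum[of "\<lambda>g. c g * g" F] F(1) by blast
      obtain g where g: "g \<in> Gm" "h = monom g" using h(1) F(3) by blast
      obtain a b where ab: "a \<in> Poly_Mapping.keys (c h)" "b \<in> Poly_Mapping.keys h" "\<mu> = a + b"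
        using h(2) keys_mult by blast
      have "b = g" using ab(2) g(2) by (simp add: monom_def)
      have "Poly_Mapping.keys a \<subseteq> {..<n}" using ab(1) F(4) h(1) unfolding polyring_def by blast
      moreover have "Poly_Mapping.keys g \<subseteq> {..<n}" using assms g(1) by blast
      moreover have "dvdm g \<mu>" using ab(3) \<open>b = g\<close> by (simp add: dvdm_def lookup_add)
      ultimately show ?thesis using g(1) ab(3) \<open>b = g\<close> by (auto simp: keys_add_nat)
    qed
    then show "p \<in> mchar n Gm" unfolding mchar_def polyring_def by blast
  qed
next
  show "(mchar n Gm :: 'a mpoly set) \<subseteq> ideal_gen n (monom ` Gm)"
  proof
    fix p :: "'a mpoly" assume p: "p \<in> mchar n Gm"
    have "K \<subseteq> Poly_Mapping.keys p \<Longrightarrow> (\<Sum>k\<in>K. Poly_Mapping.single k (Poly_Mapping.lookup p k)) \<in> ideal_gen n (monom ` Gm)" for K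
    proof (induction K rule: infinite_finite_induct)
      case (infinite A)
      then show ?case by (simp add: ideal_gen_zero)
    next
      case empty
      then show ?case by (simp add: ideal_gen_zero)
    next
      case (insert x F)
      then have x: "x \<in> Poly_Mapping.keys p" by simp
      then obtain g where "g \<in> Gm" "dvdm g x" "Poly_Mapping.keys x \<subseteq> {..<n}"
        using p unfolding mchar_def polyring_def by blast
      then have "Poly_Mapping.single x (Poly_Mapping.lookup p x) \<in> ideal_gen n (monom ` Gm)"
        by (rule ideal_gen_single)
      with insert show ?case by (simp add: ideal_gen_add)
    qed
    then show "p \<in> ideal_gen n (monom ` Gm)"
      using poly_sum_singles[of p] by (metis order_refl)
  qed
qed



lemma mchar_polyring: "p \<in> mchar n Gm \<Longrightarrow> p \<in> polyring n"
  by (simp add: mchar_def)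

lemma mchar_keys: "p \<in> mchar n Gm \<Longrightarrow> \<mu> \<in> Poly_Mapping.keys p \<Longrightarrow> \<exists>g\<in>Gm. dvdm g \<mu>"
  by (simp add: mchar_def)

lemma mchar_add: "a \<in> mchar n Gm \<Longrightarrow> b \<in> mchar n Gm \<Longrightarrow> a + b \<in> mchar n Gm"
  proof -
  assume a: "a \<in> mchar n Gm" and b: "b \<in> mchar n Gm"
  have "\<exists>g\<in>Gm. dvdm g \<mu>" if "\<mu> \<in> Poly_Mapping.keys (a + b)" for \<mu>
  proof -
    have "\<mu> \<in> Poly_Mapping.keys a \<or> \<mu> \<in> Poly_Mapping.keys b" using that keys_add[of a b] by auto
    then show ?thesis using mchar_keys[OF a] mchar_keys[OF b] by auto
  qed
  moreover have "a + b \<in> polyring n" using a b by (simp add: mchar_polyring polyring_add)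
  ultimately show ?thesis by (simp add: mchar_def)
qed

lemma mchar_diff: "a \<in> mchar n Gm \<Longrightarrow> b \<in> mchar n Gm \<Longrightarrow> a - b \<in> mchar n Gm"
  proof -
  assume a: "a \<in> mchar n Gm" and b: "b \<in> mchar n Gm"
  have "\<exists>g\<in>Gm. dvdm g \<mu>" if "\<mu> \<in> Poly_Mapping.keys (a - b)" for \<mu>
  proof -
    have "\<mu> \<in> Poly_Mapping.keys a \<or> \<mu> \<in> Poly_Mapping.keys b" using that keys_diff[of a b] by auto
    then show ?thesis using mchar_keys[OF a] mchar_keys[OF b] by auto
  qed
  moreover have "a - b \<in> polyring n" using a b by (simp add: mchar_polyring polyring_diff)
  ultimately show ?thesis by (simp add: mchar_def)
qed

lemma mchar_mult: "a \<in> mchar n Gm \<Longrightarrow> b \<in> polyring n \<Longrightarrow> a * b \<in> mchar n Gm"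
proof -
  assume a: "a \<in> mchar n Gm" and b: "b \<in> polyring n"
  have "a * b \<in> polyring n" using a b mchar_polyring polyring_mult by blast
  moreover have "\<exists>g\<in>Gm. dvdm g \<mu>" if mu: "\<mu> \<in> Poly_Mapping.keys (a * b)" for \<mu>
  proof -
    from mu keys_mult[of a b] obtain x y where xy: "x \<in> Poly_Mapping.keys a" "y \<in> Poly_Mapping.keys b" "\<mu> = x + y"
      by blast
    obtain g where "g \<in> Gm" "dvdm g x" using mchar_keys[OF a xy(1)] by blast
    then show ?thesis using xy(3) unfolding dvdm_def by (metis lookup_add trans_le_add1)
  qed
  ultimately show ?thesis by (simp add: mchar_def)
qed

lemma mchar_mult_left: "a \<in> mchar n Gm \<Longrightarrow> b \<in> polyring n \<Longrightarrow> b * a \<in> mchar n Gm"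
  by (simp add: mchar_mult mult.commute)

lemma mchar_restr: "a \<in> polyring n \<Longrightarrow> restr a {\<mu>. \<exists>g\<in>Gm. dvdm g \<mu>} \<in> mchar n Gm"
  by (simp add: mchar_def polyring_restr keys_restr)

lemma lowdeg:
  fixes a v :: "'a::field mpoly"
  assumes a: "a \<in> polyring n" and v: "v \<in> polyring n" and v0: "0 \<notin> Poly_Mapping.keys v"
    and h: "a - a * v \<in> mchar n Gm"
  shows "a \<in> mchar n Gm"
proof -
  define A where "A = {\<mu>. \<exists>g\<in>Gm. dvdm g \<mu>}"
  define a1 where "a1 = restr a A"
  define a0 where "a0 = restr a (- A)"
  have sp: "a = a1 + a0" unfolding a1_def a0_def by (rule restr_split)
  have a1J: "a1 \<in> mchar n Gm" unfolding a1_def A_def using a by (rule mchar_restr)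
  have a1P: "a1 \<in> polyring n" using a1J by (rule mchar_polyring)
  have "a0 - a0 * v = (a - a * v) - (a1 - a1 * v)"
    using sp by (simp add: algebra_simps)
  also have "\<dots> \<in> mchar n Gm"
    by (rule mchar_diff[OF h mchar_diff[OF a1J mchar_mult[OF a1J v]]])
  finally have a0J: "a0 - a0 * v \<in> mchar n Gm" .
  have "a0 = 0"
  proof (rule ccontr)
    assume "a0 \<noteq> 0"
    then have ne: "Poly_Mapping.keys a0 \<noteq> {}" by simp
    define d where "d = Min (mdeg ` Poly_Mapping.keys a0)"
    have "d \<in> mdeg ` Poly_Mapping.keys a0" unfolding d_def using ne by (intro Min_in) auto
    then obtain \<mu> where \<mu>: "\<mu> \<in> Poly_Mapping.keys a0" "mdeg \<mu> = d" by auto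
    have mn: "\<And>x. x \<in> Poly_Mapping.keys a0 \<Longrightarrow> d \<le> mdeg x" unfolding d_def by (intro Min_le) auto
    have "\<mu> \<notin> Poly_Mapping.keys (a0 * v)"
    proof
      assume "\<mu> \<in> Poly_Mapping.keys (a0 * v)"
      then obtain x y where xy: "x \<in> Poly_Mapping.keys a0" "y \<in> Poly_Mapping.keys v" "\<mu> = x + y"
        using keys_mult[of a0 v] by auto
      have "y \<noteq> 0" using xy(2) v0 by auto
      then have "1 \<le> mdeg y" by (rule mdeg_pos)
      then have "mdeg \<mu> > d" using mn[OF xy(1)] xy(3) by (simp add: mdeg_add)
      then show False using \<mu>(2) by simp
    qed
    then have "Poly_Mapping.lookup (a0 - a0 * v) \<mu> = Poly_Mapping.lookup a0 \<mu>"
      by (simp add: lookup_minus in_keys_iff)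
    then have "\<mu> \<in> Poly_Mapping.keys (a0 - a0 * v)" using \<mu>(1) by (simp add: in_keys_iff)
    then have "\<mu> \<in> A" using mchar_keys[OF a0J] by (simp add: A_def)
    moreover have "\<mu> \<notin> A" using \<mu>(1) by (simp add: a0_def keys_restr)
    ultimately show False by simp
  qed
  then show ?thesis using sp a1J by simp
qed

lemma dvdm_single: "dvdm (Poly_Mapping.single i 1) \<mu> \<longleftrightarrow> 0 < Poly_Mapping.lookup \<mu> i"
  unfolding dvdm_def by (auto simp: lookup_single when_def)

lemma mchar_vars:
  "mchar n ((\<lambda>i. Poly_Mapping.single i (1::nat)) ` A) = {p. p \<in> polyring n \<and> (\<forall>\<mu>\<in>Poly_Mapping.keys p. \<exists>i\<in>A. 0 < Poly_Mapping.lookup \<mu> i)}"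
  unfolding mchar_def by (auto simp: dvdm_single[unfolded One_nat_def])

lemma var_image: "var ` A = monom ` ((\<lambda>i. Poly_Mapping.single i (1::nat)) ` A)"
  by (simp add: image_image var_def monom_def)

lemma ideal_vars:
  assumes "A \<subseteq> {..<n}"
  shows "ideal_gen n (var ` A) = {p::'a::field mpoly. p \<in> polyring n \<and> (\<forall>\<mu>\<in>Poly_Mapping.keys p. \<exists>i\<in>A. 0 < Poly_Mapping.lookup \<mu> i)}"
proof -
  have "\<forall>g\<in>(\<lambda>i. Poly_Mapping.single i (1::nat)) ` A. Poly_Mapping.keys g \<subseteq> {..<n}" using assms by auto
  then show ?thesis unfolding var_image by (simp only: ideal_gen_monom mchar_vars)
qed

lemma monom_inj: "monom a = (monom b :: 'a::field mpoly) \<Longrightarrow> a = b"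
  unfolding monom_def by (metis lookup_single_eq lookup_single_not_eq one_neq_zero)

lemma seq_times_Nil: "seq_times [] M = {0}"
  unfolding seq_times_def by simp

lemma seq_times_single: "seq_times [f] M = {f * u | u. u \<in> M}"
proof
  show "seq_times [f] M \<subseteq> {f * u | u. u \<in> M}"
    unfolding seq_times_def by auto
  show "{f * u | u. u \<in> M} \<subseteq> seq_times [f] M"
  proof
    fix x assume "x \<in> {f * u | u. u \<in> M}"
    then obtain u where "x = f * u" "u \<in> M" by blast
    then show "x \<in> seq_times [f] M" unfolding seq_times_def
      by (intro CollectI exI[of _ "\<lambda>_. u"]) simp
  qed
qed

lemma set_plus_zero: "set_plus J {0} = J"
  unfolding set_plus_def by simp

lemma monom_in_ideal_vars:
  assumes "Poly_Mapping.keys m \<subseteq> {..<n}" "i \<in> A" "0 < Poly_Mapping.lookup m i" "A \<subseteq> {..<n}"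
  shows "(monom m :: 'c::field mpoly) \<in> ideal_gen n (var ` A)"
  unfolding ideal_vars[OF assms(4)] monom_def using assms(1-3) by (auto simp: polyring_single)



theorem lemma1p13:
  fixes n r :: nat and J :: "'a::field mpoly set"
  assumes "1 \<le> r" and "r \<le> n"
    and "J = ideal_gen n G"
    and "G \<subseteq> {monom m | m. sqfree m \<and> mdeg m \<ge> 2 \<and> Poly_Mapping.keys m \<subseteq> {..<n}}"
    and "J \<noteq> {0}"
    and "J \<subset> ideal_gen n (var ` {..<r})"
    and "\<forall>m. sqfree m \<and> mdeg m = 2 \<and> Poly_Mapping.keys m \<subseteq> {..<n} \<and>
            monom m \<in> ideal_gen n (var ` {..<r}) \<and> monom m \<notin> J \<longrightarrow> Poly_Mapping.keys m \<subseteq> {..<r}"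
  shows "depth_quot n (ideal_gen n (var ` {..<r})) J = 1"
proof -
  let ?I = "ideal_gen n (var ` {..<r}) :: 'a mpoly set"
  let ?M = "ideal_gen n (var ` {..<n}) :: 'a mpoly set"
  have r0: "0 < r" using assms(1) by simp
  have n0: "0 < n" using assms(1,2) by simp
  have I_iff: "\<And>p. p \<in> ?I \<longleftrightarrow> p \<in> polyring n \<and> (\<forall>\<mu>\<in>Poly_Mapping.keys p. \<exists>i\<in>{..<r}. 0 < Poly_Mapping.lookup \<mu> i)"
    using ideal_vars[of "{..<r}" n] assms(2) by auto
  have M_iff: "\<And>p. p \<in> ?M \<longleftrightarrow> p \<in> polyring n \<and> (\<forall>\<mu>\<in>Poly_Mapping.keys p. \<exists>i\<in>{..<n}. 0 < Poly_Mapping.lookup \<mu> i)"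
    using ideal_vars[of "{..<n}" n] by auto
  define Gm where "Gm = {m. (monom m :: 'a mpoly) \<in> G}"
  have Gm_prop: "sqfree g \<and> 2 \<le> mdeg g \<and> Poly_Mapping.keys g \<subseteq> {..<n}" if g: "g \<in> Gm" for g
  proof -
    have "monom g \<in> G" using g by (simp add: Gm_def)
    then obtain m where m: "(monom g :: 'a mpoly) = monom m" "sqfree m \<and> mdeg m \<ge> 2 \<and> Poly_Mapping.keys m \<subseteq> {..<n}"
      using assms(4) by blast
    have "g = m" using m(1) by (rule monom_inj)
    then show ?thesis using m(2) by simp
  qed
  have G_eq: "G = monom ` Gm"
  proof
    show "G \<subseteq> monom ` Gm"
    proof
      fix x assume x: "x \<in> G"
      then obtain m where "x = monom m" using assms(4) by blast
      then show "x \<in> monom ` Gm" using x by (simp add: Gm_def)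
    qed
    show "monom ` Gm \<subseteq> G" by (auto simp: Gm_def)
  qed
  have J_eq: "J = mchar n Gm"
    unfolding assms(3) G_eq by (rule ideal_gen_monom) (simp add: Gm_prop)
  have Jdeg: "2 \<le> mdeg \<mu>" if pJ: "p \<in> J" "\<mu> \<in> Poly_Mapping.keys p" for p \<mu>
  proof -
    obtain g where "g \<in> Gm" "dvdm g \<mu>" using mchar_keys pJ J_eq by blast
    then show ?thesis using Gm_prop mdeg_mono by (meson order_trans)
  qed
  have var_P: "var j \<in> polyring n" if "j < n" for j
    unfolding var_def using that by (intro polyring_single) simp
  have keys_var: "Poly_Mapping.keys (var j :: 'a mpoly) = {Poly_Mapping.single j 1}" for j
    by (simp add: var_def)
  have var0I: "var 0 \<in> ?I"
    unfolding I_iff using var_P[OF n0] r0 by (auto simp: keys_var intro!: bexI[of _ 0])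
  have var0J: "var 0 \<notin> J"
  proof
    assume "var 0 \<in> J"
    then have "2 \<le> mdeg (Poly_Mapping.single 0 (1::nat))" using Jdeg by (simp add: keys_var)
    then show False by (simp add: mdeg_single mdeg_single[unfolded One_nat_def])
  qed
  have cross: "q * u \<in> J" if q: "q \<in> polyring n" and qr: "\<forall>\<alpha>\<in>Poly_Mapping.keys q. \<exists>j. r \<le> j \<and> 0 < Poly_Mapping.lookup \<alpha> j"
    and u: "u \<in> ?I" for q u
  proof -
    have uP: "u \<in> polyring n" using u I_iff by blast
    have "\<exists>g\<in>Gm. dvdm g \<mu>" if mu: "\<mu> \<in> Poly_Mapping.keys (q * u)" for \<mu>
    proof -
      from mu keys_mult[of q u] obtain x y where xy: "x \<in> Poly_Mapping.keys q" "y \<in> Poly_Mapping.keys u" "\<mu> = x + y"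
        by blast
      obtain j where j: "r \<le> j" "0 < Poly_Mapping.lookup x j" using qr xy(1) by blast
      have "Poly_Mapping.keys x \<subseteq> {..<n}" using q xy(1) by (simp add: polyring_iff)
      moreover have "j \<in> Poly_Mapping.keys x" using j(2) by (simp add: in_keys_iff)
      ultimately have jn: "j < n" by blast
      obtain i where i: "i < r" "0 < Poly_Mapping.lookup y i" using u xy(2) I_iff by blast
      define m where "m = Poly_Mapping.single i (1::nat) + Poly_Mapping.single j 1"
      have ij: "i \<noteq> j" using i j by simp
      have lm: "Poly_Mapping.lookup m k = (if k = i \<or> k = j then 1 else 0)" for k
        unfolding m_def using ij by (auto simp: lookup_add lookup_single when_def)
      have sq: "sqfree m" unfolding sqfree_def lm by simp
      have md: "mdeg m = 2" unfolding m_def by (simp add: mdeg_add mdeg_single mdeg_single[unfolded One_nat_def])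
      have km: "Poly_Mapping.keys m = {i, j}" by (auto simp: in_keys_iff lm split: if_splits)
      have kmn: "Poly_Mapping.keys m \<subseteq> {..<n}" using km i jn assms(2) by auto
      have mI: "monom m \<in> ?I"
        unfolding I_iff monom_def using kmn i by (auto simp: polyring_single lm)
      have nk: "\<not> Poly_Mapping.keys m \<subseteq> {..<r}" using km j by auto
      note H = assms(7)[rule_format, of m]
      have "monom m \<in> J"
      proof (rule ccontr)
        assume "monom m \<notin> J"
        have "Poly_Mapping.lookup m i = 1" using lm by simp
        then have mI2: "monom m \<in> ideal_gen n (var ` {..<r})"
          using monom_in_ideal_vars[OF kmn, of i "{..<r}"] i(1) assms(2) by auto
        have "Poly_Mapping.keys m \<subseteq> {..<r}" using H[OF conjI[OF sq conjI[OF md conjI[OF kmn conjI[OF mI2 \<open>monom m \<notin> J\<close>]]]]] .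
        then show False using nk by blast
      qed
      then have mJ: "(monom m :: 'a mpoly) \<in> mchar n Gm" using J_eq by simp
      have "m \<in> Poly_Mapping.keys (monom m :: 'a mpoly)" by (simp add: monom_def)
      with mJ obtain g where g: "g \<in> Gm" "dvdm g m"
        using mchar_keys by blast
      have "dvdm m \<mu>" unfolding dvdm_def
      proof
        fix k show "Poly_Mapping.lookup m k \<le> Poly_Mapping.lookup \<mu> k"
          using i j xy(3) by (auto simp: lm lookup_add)
      qed
      then have "dvdm g \<mu>" using g(2) unfolding dvdm_def by (meson order_trans)
      then show ?thesis using g(1) by blast
    qed
    moreover have "q * u \<in> polyring n" using q uP by (rule polyring_mult)
    ultimately show ?thesis unfolding J_eq mchar_def by blast
  qed
  have noreg2: "length fs \<le> 1" if reg: "quot_regular_seq n ?I J fs" for fs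
  proof (rule ccontr)
    assume "\<not> length fs \<le> 1"
    then have len: "2 \<le> length fs" by simp
    define f1 where "f1 = fs ! 0"
    define f2 where "f2 = fs ! 1"
    have allM: "\<forall>f\<in>set fs. f \<in> ?M" using reg unfolding quot_regular_seq_def by blast
    have l0: "0 < length fs" and l1: "1 < length fs" using len by auto
    have f1M: "f1 \<in> ?M" using allM nth_mem[OF l0] unfolding f1_def by blast
    have f2M: "f2 \<in> ?M" using allM nth_mem[OF l1] unfolding f2_def by blast
    have tk1: "take 1 fs = [f1]" using len unfolding f1_def by (cases fs) auto
    have regc: "\<forall>i<length fs. \<forall>u\<in>?I. fs ! i * u \<in> set_plus J (seq_times (take i fs) ?I) \<longrightarrow> u \<in> set_plus J (seq_times (take i fs) ?I)"
      using reg unfolding quot_regular_seq_def by blast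
    have reg0: "u \<in> J" if "u \<in> ?I" "f1 * u \<in> J" for u
    proof -
      have "\<forall>u\<in>?I. fs ! 0 * u \<in> set_plus J (seq_times (take 0 fs) ?I) \<longrightarrow> u \<in> set_plus J (seq_times (take 0 fs) ?I)"
        using regc l0 by blast
      then show ?thesis using that unfolding f1_def by (simp add: seq_times_Nil set_plus_zero)
    qed
    have reg1: "u \<in> set_plus J {f1 * v | v. v \<in> ?I}"
      if "u \<in> ?I" "f2 * u \<in> set_plus J {f1 * v | v. v \<in> ?I}" for u
    proof -
      have "\<forall>u\<in>?I. fs ! 1 * u \<in> set_plus J (seq_times (take 1 fs) ?I) \<longrightarrow> u \<in> set_plus J (seq_times (take 1 fs) ?I)"
        using regc l1 by blast
      then show ?thesis using that tk1 unfolding f2_def by (simp add: seq_times_single)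
    qed
    define A0 where "A0 = {\<mu>::nat \<Rightarrow>\<^sub>0 nat. Poly_Mapping.keys \<mu> \<subseteq> {..<r}}"
    have partA: "restr p A0 \<in> ?I" if p: "p \<in> ?M" for p
    proof -
      have "p \<in> polyring n" using p M_iff by blast
      moreover have "\<exists>i\<in>{..<r}. 0 < Poly_Mapping.lookup \<mu> i" if mu: "\<mu> \<in> Poly_Mapping.keys (restr p A0)" for \<mu>
      proof -
        have k1: "\<mu> \<in> Poly_Mapping.keys p" and k2: "Poly_Mapping.keys \<mu> \<subseteq> {..<r}" using mu by (auto simp: keys_restr A0_def)
        obtain i where i: "0 < Poly_Mapping.lookup \<mu> i" using p M_iff k1 by blast
        then have "i \<in> Poly_Mapping.keys \<mu>" by (simp add: in_keys_iff)
        then have "i \<in> {..<r}" using k2 by blast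
        then show ?thesis using i by blast
      qed
      ultimately show ?thesis unfolding I_iff by (simp add: polyring_restr)
    qed
    have partB: "restr p (- A0) \<in> polyring n \<and> (\<forall>\<alpha>\<in>Poly_Mapping.keys (restr p (- A0)). \<exists>j. r \<le> j \<and> 0 < Poly_Mapping.lookup \<alpha> j)"
      if p: "p \<in> ?M" for p
    proof -
      have pP: "p \<in> polyring n" using p M_iff by blast
      have "\<exists>j. r \<le> j \<and> 0 < Poly_Mapping.lookup \<alpha> j" if al: "\<alpha> \<in> Poly_Mapping.keys (restr p (- A0))" for \<alpha>
      proof -
        have "\<not> Poly_Mapping.keys \<alpha> \<subseteq> {..<r}" using al by (auto simp: keys_restr A0_def)
        then obtain j where "j \<in> Poly_Mapping.keys \<alpha>" "\<not> j < r" by auto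
        then show ?thesis by (metis in_keys_iff not_le not_gr0)
      qed
      then show ?thesis using pP by (simp add: polyring_restr)
    qed
    define a where "a = restr f1 A0"
    define b where "b = restr f1 (- A0)"
    define c where "c = restr f2 A0"
    define d where "d = restr f2 (- A0)"
    have f1eq: "f1 = a + b" unfolding a_def b_def by (rule restr_split)
    have f2eq: "f2 = c + d" unfolding c_def d_def by (rule restr_split)
    have aI: "a \<in> ?I" unfolding a_def using f1M by (rule partA)
    have cI: "c \<in> ?I" unfolding c_def using f2M by (rule partA)
    have bX: "b * u \<in> J" if "u \<in> ?I" for u
      using partB[OF f1M] that unfolding b_def by (intro cross) auto
    have dX: "d * u \<in> J" if "u \<in> ?I" for u
      using partB[OF f2M] that unfolding d_def by (intro cross) auto
    have e1: "f2 * a = (d * a - b * c) + f1 * c" unfolding f1eq f2eq by (simp add: algebra_simps)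
    have "d * a - b * c \<in> J" unfolding J_eq
      using dX[OF aI] bX[OF cI] J_eq by (intro mchar_diff) auto
    then have "f2 * a \<in> set_plus J {f1 * v | v. v \<in> ?I}"
      unfolding set_plus_def e1 using cI by blast
    then have "a \<in> set_plus J {f1 * v | v. v \<in> ?I}" by (rule reg1[OF aI])
    then obtain j v where jv: "j \<in> J" "v \<in> ?I" "a = j + f1 * v"
      unfolding set_plus_def by blast
    have "a - a * v = (a - f1 * v) + b * v" unfolding f1eq by (simp add: algebra_simps)
    also have "a - f1 * v = j" using jv(3) by simp
    finally have "a - a * v = j + b * v" .
    moreover have "j + b * v \<in> mchar n Gm" using jv(1) bX[OF jv(2)] J_eq by (intro mchar_add) auto
    ultimately have h: "a - a * v \<in> mchar n Gm" by simp
    have aP: "a \<in> polyring n" using aI I_iff by blast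
    have vP: "v \<in> polyring n" using jv(2) I_iff by blast
    have v0: "0 \<notin> Poly_Mapping.keys v" using jv(2) I_iff by fastforce
    have aJ: "a \<in> mchar n Gm" using aP vP v0 h by (rule lowdeg)
    have "f1 * var 0 = a * var 0 + b * var 0" unfolding f1eq by (simp add: algebra_simps)
    moreover have "a * var 0 \<in> mchar n Gm" using aJ var_P[OF n0] by (rule mchar_mult)
    moreover have "b * var 0 \<in> mchar n Gm" using bX[OF var0I] J_eq by simp
    ultimately have "f1 * var 0 \<in> J" using J_eq mchar_add by simp
    then have "var 0 \<in> J" using reg0 var0I by blast
    then show False using var0J by blast
  qed
  define f where "f = (\<Sum>j<r. var j :: 'a mpoly)"
  have fkeys: "\<exists>j<r. \<mu> = Poly_Mapping.single j 1" if "\<mu> \<in> Poly_Mapping.keys f" for \<mu>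
  proof -
    from that keys_sum[of var "{..<r}"] obtain j where "j < r" "\<mu> \<in> Poly_Mapping.keys (var j :: 'a mpoly)"
      unfolding f_def by blast
    then show ?thesis using keys_var[of j] by auto
  qed
  have fP: "f \<in> polyring n"
    unfolding polyring_iff using fkeys assms(2) by fastforce
  have fM: "f \<in> ?M"
    unfolding M_iff
  proof (intro conjI ballI fP)
    fix \<mu> assume "\<mu> \<in> Poly_Mapping.keys f"
    then obtain j where "j < r" "\<mu> = Poly_Mapping.single j 1" using fkeys by blast
    then show "\<exists>i\<in>{..<n}. 0 < Poly_Mapping.lookup \<mu> i" using assms(2) by (intro bexI[of _ j]) auto
  qed
  have freg: "u \<in> J" if uI: "u \<in> ?I" and fuJ: "f * u \<in> J" for u
  proof -
    define Aj where "Aj = {\<mu>. \<exists>g\<in>Gm. dvdm g \<mu>}"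
    define u1 where "u1 = restr u Aj"
    define u0 where "u0 = restr u (- Aj)"
    have uP: "u \<in> polyring n" using uI I_iff by blast
    have usp: "u = u1 + u0" unfolding u1_def u0_def by (rule restr_split)
    have u1J: "u1 \<in> mchar n Gm" unfolding u1_def Aj_def using uP by (rule mchar_restr)
    have u0I: "u0 \<in> ?I" using uI unfolding I_iff u0_def by (simp add: polyring_restr keys_restr)
    have "f * u0 = f * u - f * u1" unfolding usp by (simp add: algebra_simps)
    also have "\<dots> \<in> mchar n Gm" using fuJ J_eq mchar_mult_left[OF u1J fP] by (intro mchar_diff) auto
    finally have fu0J: "f * u0 \<in> mchar n Gm" .
    have "u0 = 0"
    proof (rule ccontr)
      assume "u0 \<noteq> 0"
      then obtain \<mu>0 where \<mu>0: "\<mu>0 \<in> Poly_Mapping.keys u0" by (metis keys_eq_empty ex_in_conv)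
      then obtain i where i: "i < r" "0 < Poly_Mapping.lookup \<mu>0 i" using u0I I_iff by blast
      define S where "S = {\<mu> \<in> Poly_Mapping.keys u0. 0 < Poly_Mapping.lookup \<mu> i}"
      have Sfin: "finite S" unfolding S_def by simp
      have \<mu>0S: "\<mu>0 \<in> S" using \<mu>0 i by (simp add: S_def)
      define Mx where "Mx = Max ((\<lambda>\<mu>. Poly_Mapping.lookup \<mu> i) ` S)"
      have "Mx \<in> (\<lambda>\<mu>. Poly_Mapping.lookup \<mu> i) ` S" unfolding Mx_def using Sfin \<mu>0S by (intro Max_in) auto
      then obtain \<mu> where \<mu>: "\<mu> \<in> S" "Poly_Mapping.lookup \<mu> i = Mx" by auto
      have mx: "Poly_Mapping.lookup \<beta> i \<le> Mx" if "\<beta> \<in> S" for \<beta>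
        unfolding Mx_def using Sfin that by (intro Max_ge) auto
      define \<nu> where "\<nu> = Poly_Mapping.single i 1 + \<mu>"
      have t_i: "Poly_Mapping.lookup (var i * u0) \<nu> = Poly_Mapping.lookup u0 \<mu>"
        unfolding var_def \<nu>_def by (simp add: mult_single_lookup)
      have t_j: "Poly_Mapping.lookup (var j * u0) \<nu> = 0" if "j \<noteq> i" for j
      proof (rule ccontr)
        assume "Poly_Mapping.lookup (var j * u0) \<nu> \<noteq> 0"
        then have "\<nu> \<in> Poly_Mapping.keys (var j * u0)" by (simp add: in_keys_iff)
        then obtain x y where xy: "x \<in> Poly_Mapping.keys (var j :: 'a mpoly)" "y \<in> Poly_Mapping.keys u0" "\<nu> = x + y"
          using keys_mult[of "var j" u0] by blast
        have "x = Poly_Mapping.single j 1" using xy(1) by (simp add: keys_var)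
        then have "Poly_Mapping.lookup y i = Poly_Mapping.lookup \<mu> i + 1"
          using xy(3) that unfolding \<nu>_def
          by (metis add.commute add_0 lookup_add lookup_single_eq lookup_single_not_eq)
        moreover then have "y \<in> S" using xy(2) by (simp add: S_def)
        ultimately show False using mx \<mu>(2) by fastforce
      qed
      have "f * u0 = (\<Sum>j<r. var j * u0)" unfolding f_def by (simp add: sum_distrib_right)
      then have "Poly_Mapping.lookup (f * u0) \<nu> = (\<Sum>j<r. Poly_Mapping.lookup (var j * u0) \<nu>)" by (simp add: lookup_sum)
      also have "\<dots> = Poly_Mapping.lookup (var i * u0) \<nu> + (\<Sum>j\<in>{..<r} - {i}. Poly_Mapping.lookup (var j * u0) \<nu>)"
        using i(1) by (simp add: sum.remove)
      also have "(\<Sum>j\<in>{..<r} - {i}. Poly_Mapping.lookup (var j * u0) \<nu>) = 0"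
        using t_j by (intro sum.neutral) auto
      finally have "Poly_Mapping.lookup (f * u0) \<nu> = Poly_Mapping.lookup u0 \<mu>" using t_i by simp
      moreover have "\<mu> \<in> Poly_Mapping.keys u0" using \<mu>(1) by (simp add: S_def)
      ultimately have "\<nu> \<in> Poly_Mapping.keys (f * u0)" by (simp add: in_keys_iff)
      then obtain g where g: "g \<in> Gm" "dvdm g \<nu>" using mchar_keys[OF fu0J] by blast
      have "dvdm g \<mu>" unfolding dvdm_def
      proof
        fix k
        show "Poly_Mapping.lookup g k \<le> Poly_Mapping.lookup \<mu> k"
        proof (cases "k = i")
          case True
          have "Poly_Mapping.lookup g k \<le> 1" using Gm_prop[OF g(1)] by (simp add: sqfree_def)
          moreover have "0 < Poly_Mapping.lookup \<mu> k" using \<mu>(1) True by (simp add: S_def)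
          ultimately show ?thesis by simp
        next
          case False
          then have "Poly_Mapping.lookup \<nu> k = Poly_Mapping.lookup \<mu> k" unfolding \<nu>_def by (simp add: lookup_add lookup_single_not_eq)
          then show ?thesis using g(2) unfolding dvdm_def by metis
        qed
      qed
      then have "\<mu> \<in> Aj" using g(1) by (auto simp: Aj_def)
      moreover have "\<mu> \<notin> Aj" using \<open>\<mu> \<in> Poly_Mapping.keys u0\<close> by (simp add: u0_def keys_restr)
      ultimately show False by simp
    qed
    then show ?thesis using usp u1J J_eq by simp
  qed
  have fcov: "\<not> ?I \<subseteq> set_plus J (seq_times [f] ?I)"
  proof
    assume "?I \<subseteq> set_plus J (seq_times [f] ?I)"
    then have "var 0 \<in> set_plus J (seq_times [f] ?I)" using var0I by blast
    then obtain j v where jv: "j \<in> J" "v \<in> ?I" "var 0 = j + f * v"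
      unfolding set_plus_def seq_times_single by blast
    have "Poly_Mapping.keys (j + f * v) = {Poly_Mapping.single 0 1}" unfolding jv(3)[symmetric] by (rule keys_var)
    then have "Poly_Mapping.single 0 1 \<in> Poly_Mapping.keys (j + f * v)" by simp
    then have "Poly_Mapping.single 0 1 \<in> Poly_Mapping.keys j \<or> Poly_Mapping.single 0 1 \<in> Poly_Mapping.keys (f * v)"
      using keys_add[of j "f * v"] by blast
    then show False
    proof
      assume "Poly_Mapping.single 0 1 \<in> Poly_Mapping.keys j"
      then have "2 \<le> mdeg (Poly_Mapping.single 0 (1::nat))" using Jdeg jv(1) by blast
      then show False by (simp add: mdeg_single mdeg_single[unfolded One_nat_def])
    next
      assume "Poly_Mapping.single 0 1 \<in> Poly_Mapping.keys (f * v)"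
      then obtain x y where xy: "x \<in> Poly_Mapping.keys f" "y \<in> Poly_Mapping.keys v" "Poly_Mapping.single 0 1 = x + y"
        using keys_mult[of f v] by blast
      obtain j' where "x = Poly_Mapping.single j' 1" using fkeys xy(1) by blast
      then have "mdeg x = 1" by (simp add: mdeg_single mdeg_single[unfolded One_nat_def])
      moreover have "y \<noteq> 0" using jv(2) xy(2) I_iff by fastforce
      then have "1 \<le> mdeg y" by (rule mdeg_pos)
      ultimately have "2 \<le> mdeg (x + y)" by (simp add: mdeg_add)
      then show False using xy(3) by (metis mdeg_single numeral_le_one_iff semiring_norm(69))
    qed
  qed
  have reg: "quot_regular_seq n ?I J [f]"
    unfolding quot_regular_seq_def using fM freg fcov
    by (auto simp: seq_times_Nil set_plus_zero)
  show ?thesis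
    unfolding depth_quot_def
  proof (rule cSup_eq_maximum)
    show "1 \<in> {length fs |fs. quot_regular_seq n ?I J fs}" using reg by force
    show "\<And>x. x \<in> {length fs |fs. quot_regular_seq n ?I J fs} \<Longrightarrow> x \<le> 1"
      using noreg2 by blast
  qed
qed

end
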